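(* The function $f:[0,1]^2\to\mathbb R$ defined by $$f(\beta_\ell,\beta_h)=\sum_{s'\in\{\ell,h\}}P(s')\sum_{r'\in\{\ell,h\}}\sigma(r'\mid s')\sum_{s\in\{\ell,h\}}P(s\mid s')\sum_{r\in\{\ell,h\}}\sigma(r\mid s)\,PS(r,P_{r'})$$ is convex on $[0,1]^2$. Here $\sigma=(\beta_\ell,\beta_h)$, with $\sigma(h\mid \ell)=\beta_\ell$, $\sigma(\ell\mid\ell)=1-\beta_\ell$, $\sigma(h\mid h)=\beta_h$ and $\sigma(\ell\mid h)=1-\beta_h$.
   Context: Peer prediction setting with signals $\{\ell,h\}$ and a symmetric common prior. $P(s)>0$ is the marginal probability of signal $s$. $P(s\mid s')$ is the probability that another agent has signal $s$ given that one's own signal is $s'$, and $P_{s'}=P(\cdot\mid s')$. Standing assumptions: $P(h\mid h)>P(h\mid\ell)$, $P(h\mid\ell)>0$ and $P(\ell\mid h)>0$. $PS$ is a strictly proper scoring rule on $\{\ell,h\}$, i.e. $\mathbb E_{s\sim p}[PS(s,p)]>\mathbb E_{s\sim p}[PS(s,q)]$ for all $p\ne q$. The quantity $f(\beta_\ell,\beta_h)$ is the expected reward of an agent from one peer when both play the strategy $(\beta_\ell,\beta_h)$. *)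

theory Defs
  imports "HOL-Analysis.Analysis"
begin

text \<open>Signals/reports: L = low (ell), H = high (h).\<close>
datatype signal = L | H

definition signals :: "signal set" where "signals = {L, H}"

text \<open>A symmetric common prior is given by a joint distribution J s s' (probability
  that one agent has signal s and the other has s').\<close>
definition sym_prior :: "(signal \<Rightarrow> signal \<Rightarrow> real) \<Rightarrow> bool" where
  "sym_prior J \<longleftrightarrow> (\<forall>s s'. J s s' \<ge> 0) \<and> (\<Sum>s\<in>signals. \<Sum>s'\<in>signals. J s s') = 1
     \<and> (\<forall>s s'. J s s' = J s' s)"

definition marg :: "(signal \<Rightarrow> signal \<Rightarrow> real) \<Rightarrow> signal \<Rightarrow> real" where
  "marg J s = (\<Sum>s'\<in>signals. J s s')"

text \<open>Conditional P(s | s'): probability the other agent has s given one's own signal s'.\<close>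
definition cond :: "(signal \<Rightarrow> signal \<Rightarrow> real) \<Rightarrow> signal \<Rightarrow> signal \<Rightarrow> real" where
  "cond J s s' = J s s' / marg J s'"

definition is_dist :: "(signal \<Rightarrow> real) \<Rightarrow> bool" where
  "is_dist p \<longleftrightarrow> (\<forall>s. p s \<ge> 0) \<and> (\<Sum>s\<in>signals. p s) = 1"

definition strictly_proper :: "(signal \<Rightarrow> (signal \<Rightarrow> real) \<Rightarrow> real) \<Rightarrow> bool" where
  "strictly_proper PS \<longleftrightarrow> (\<forall>p q. is_dist p \<longrightarrow> is_dist q \<longrightarrow> p \<noteq> q \<longrightarrow>
      (\<Sum>s\<in>signals. p s * PS s p) > (\<Sum>s\<in>signals. p s * PS s q))"

definition strat :: "real \<Rightarrow> real \<Rightarrow> signal \<Rightarrow> signal \<Rightarrow> real" where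
  "strat bl bh r s = (case s of
      L \<Rightarrow> (case r of H \<Rightarrow> bl | L \<Rightarrow> 1 - bl)
    | H \<Rightarrow> (case r of H \<Rightarrow> bh | L \<Rightarrow> 1 - bh))"

definition reward ::
  "(signal \<Rightarrow> signal \<Rightarrow> real) \<Rightarrow> (signal \<Rightarrow> (signal \<Rightarrow> real) \<Rightarrow> real) \<Rightarrow> real \<Rightarrow> real \<Rightarrow> real" where
  "reward J PS bl bh =
     (\<Sum>s'\<in>signals. marg J s' * (\<Sum>r'\<in>signals. strat bl bh r' s' *
        (\<Sum>s\<in>signals. cond J s s' * (\<Sum>r\<in>signals. strat bl bh r s * PS r (\<lambda>t. cond J t r')))))"

end

theory Submission
  imports Defs
begin

lemma quad_nonneg:
  fixes a b c d1 d2 :: real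
  assumes "a \<ge> 0" "a * c > b^2"
  shows "a*d1^2 + 2*b*d1*d2 + c*d2^2 \<ge> 0"
proof -
  have a: "a > 0" using assms
    by (metis less_eq_real_def mult_zero_left not_less zero_le_power2)
  have "a * (a*d1^2 + 2*b*d1*d2 + c*d2^2) = (a*d1 + b*d2)^2 + (a*c - b^2)*d2^2"
    by (simp add: power2_eq_square algebra_simps)
  also have "\<dots> \<ge> 0" using assms by simp
  finally show ?thesis using a by (simp add: zero_le_mult_iff)
qed

lemma poly_id:
  fixes t x1 x2 y1 y2 a b c pHH pHL pLH pLL :: real
  defines "G \<equiv> \<lambda>bl bh.
     a * ((1-bl)*(1-bl)*pLL + (1-bl)*bl*pHL + bl*(1-bl)*pLH + bl*bl*pHH)
   + b * ((1-bh)*(1-bl)*pLL + (1-bh)*bl*pHL + bh*(1-bl)*pLH + bh*bl*pHH)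
   + b * ((1-bl)*(1-bh)*pLL + (1-bl)*bh*pHL + bl*(1-bh)*pLH + bl*bh*pHH)
   + c * ((1-bh)*(1-bh)*pLL + (1-bh)*bh*pHL + bh*(1-bh)*pLH + bh*bh*pHH)"
  shows "(1-t) * G x1 x2 + t * G y1 y2 - G ((1-t)*x1 + t*y1) ((1-t)*x2 + t*y2)
     = t*(1-t)*(pHH - pHL - pLH + pLL) *
        (a*(x1-y1)^2 + 2*b*(x1-y1)*(x2-y2) + c*(x2-y2)^2)"
  unfolding G_def by (simp add: power2_eq_square algebra_simps)

theorem mainTheorem9:
  fixes J :: "signal \<Rightarrow> signal \<Rightarrow> real"
    and PS :: "signal \<Rightarrow> (signal \<Rightarrow> real) \<Rightarrow> real"
  assumes "sym_prior J"
    and "\<And>s. marg J s > 0"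
    and "cond J H H > cond J H L"
    and "cond J H L > 0"
    and "cond J L H > 0"
    and "strictly_proper PS"
  shows "convex_on ({0..1} \<times> {0..1}) (\<lambda>(bl, bh). reward J PS bl bh)"
proof -
  have nn: "\<And>s s'. J s s' \<ge> 0" and sym: "\<And>s s'. J s s' = J s' s"
    using assms(1) unfolding sym_prior_def by auto
  have mL: "marg J L = J L L + J L H" and mH: "marg J H = J H L + J H H"
    by (simp_all add: marg_def signals_def)
  have pL: "J L L + J L H > 0" and pH: "J H L + J H H > 0" using assms(2) mL mH by metis+
  define a where "a = J L L"
  define b where "b = J L H"
  define c where "c = J H H"
  have bH: "J H L = b" using sym b_def by simp
  define pHH where "pHH = PS H (\<lambda>t. cond J t H)"
  define pHL where "pHL = PS H (\<lambda>t. cond J t L)"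
  define pLH where "pLH = PS L (\<lambda>t. cond J t H)"
  define pLL where "pLL = PS L (\<lambda>t. cond J t L)"
  define G where "G \<equiv> \<lambda>bl bh.
     a * ((1-bl)*(1-bl)*pLL + (1-bl)*bl*pHL + bl*(1-bl)*pLH + bl*bl*pHH)
   + b * ((1-bh)*(1-bl)*pLL + (1-bh)*bl*pHL + bh*(1-bl)*pLH + bh*bl*pHH)
   + b * ((1-bl)*(1-bh)*pLL + (1-bl)*bh*pHL + bl*(1-bh)*pLH + bl*bh*pHH)
   + c * ((1-bh)*(1-bh)*pLL + (1-bh)*bh*pHL + bh*(1-bh)*pLH + bh*bh*pHH)"
  have cLL: "cond J L L = a / (a+b)" and cHL: "cond J H L = b/(a+b)"
    and cLH: "cond J L H = b/(b+c)" and cHH: "cond J H H = c/(b+c)"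
    using mL mH bH by (simp_all add: cond_def a_def b_def c_def)
  have ab: "a + b > 0" and bc: "b + c > 0" using pL pH bH a_def b_def c_def by auto
  have rew: "reward J PS bl bh = G bl bh" for bl bh
  proof -
    have k1: "marg J L * cond J L L = a" "marg J L * cond J H L = b"
      "marg J H * cond J L H = b" "marg J H * cond J H H = c"
      using assms(2)[of L] assms(2)[of H] bH by (simp_all add: cond_def a_def b_def c_def)
    have "reward J PS bl bh =
       (1-bl) * (marg J L * cond J L L) * ((1-bl) * pLL + bl * pHL)
     + (1-bl) * (marg J L * cond J H L) * ((1-bh)*pLL + bh*pHL)
     + bl * (marg J L * cond J L L) * ((1-bl) * pLH + bl * pHH)
     + bl * (marg J L * cond J H L) * ((1-bh)*pLH + bh*pHH)
     + (1-bh) * (marg J H * cond J L H) * ((1-bl) * pLL + bl * pHL)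
     + (1-bh) * (marg J H * cond J H H) * ((1-bh)*pLL + bh*pHL)
     + bh * (marg J H * cond J L H) * ((1-bl) * pLH + bl * pHH)
     + bh * (marg J H * cond J H H) * ((1-bh)*pLH + bh*pHH)"
      unfolding reward_def
      by (simp add: signals_def strat_def pHH_def pHL_def pLH_def pLL_def algebra_simps)
    also have "\<dots> = G bl bh"
      unfolding k1 G_def by (simp add: algebra_simps)
    finally show ?thesis .
  qed
  have det: "a * c > b^2"
  proof -
    have "c/(b+c) > b/(a+b)" using assms(3) cHH cHL by simp
    hence "c*(a+b) > b*(b+c)" using ab bc by (simp add: field_simps)
    thus ?thesis by (simp add: power2_eq_square algebra_simps)
  qed
  have a0: "a \<ge> 0" using nn a_def by simp
  define p where "p = (\<lambda>t. cond J t H)"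
  define q where "q = (\<lambda>t. cond J t L)"
  have distp: "is_dist p" unfolding is_dist_def p_def
  proof
    show "\<forall>s. 0 \<le> cond J s H" using nn assms(2) by (auto simp: cond_def intro!: divide_nonneg_pos)
    show "(\<Sum>s\<in>signals. cond J s H) = 1"
      unfolding signals_def using bc by (simp add: cLH cHH add_divide_distrib[symmetric])
  qed
  have distq: "is_dist q" unfolding is_dist_def q_def
  proof
    show "\<forall>s. 0 \<le> cond J s L" using nn assms(2) by (auto simp: cond_def intro!: divide_nonneg_pos)
    show "(\<Sum>s\<in>signals. cond J s L) = 1"
      unfolding signals_def using ab by (simp add: cLL cHL add_divide_distrib[symmetric])
  qed
  have pq: "p \<noteq> q" using assms(3) p_def q_def by (metis less_irrefl)
  have s1: "(\<Sum>s\<in>signals. p s * PS s p) > (\<Sum>s\<in>signals. p s * PS s q)"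
    using assms(6) distp distq pq unfolding strictly_proper_def by blast
  have s2: "(\<Sum>s\<in>signals. q s * PS s q) > (\<Sum>s\<in>signals. q s * PS s p)"
    using assms(6) distp distq pq unfolding strictly_proper_def by metis
  have pL1: "p L = 1 - p H" and qL1: "q L = 1 - q H"
    using distp distq unfolding is_dist_def by (simp_all add: signals_def)
  have "(p H - q H) * (pHH - pHL - pLH + pLL) > 0"
  proof -
    have "0 < (\<Sum>s\<in>signals. p s * PS s p) - (\<Sum>s\<in>signals. p s * PS s q)
        + ((\<Sum>s\<in>signals. q s * PS s q) - (\<Sum>s\<in>signals. q s * PS s p))"
      using s1 s2 by linarith
    also have "\<dots> = (p H - q H) * (pHH - pHL - pLH + pLL)"
      unfolding pHH_def pHL_def pLH_def pLL_def p_def[symmetric] q_def[symmetric]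
      by (simp add: signals_def pL1 qL1 algebra_simps)
    finally show ?thesis .
  qed
  moreover have "p H - q H > 0" using assms(3) p_def q_def by simp
  ultimately have K: "pHH - pHL - pLH + pLL > 0" by (simp add: zero_less_mult_iff)
  show ?thesis
  proof (rule convex_onI)
    show "convex ({0..1::real} \<times> {0..1::real})"
      by (intro convex_Times convex_real_interval)
  next
    fix t :: real and x y :: "real \<times> real"
    assume t: "0 < t" "t < 1"
    obtain x1 x2 where x: "x = (x1, x2)" by (cases x)
    obtain y1 y2 where y: "y = (y1, y2)" by (cases y)
    have id: "(1-t) * G x1 x2 + t * G y1 y2 - G ((1-t)*x1 + t*y1) ((1-t)*x2 + t*y2)
     = t*(1-t)*(pHH - pHL - pLH + pLL) *
        (a*(x1-y1)^2 + 2*b*(x1-y1)*(x2-y2) + c*(x2-y2)^2)"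
      unfolding G_def by (rule poly_id)
    have "0 \<le> t*(1-t)*(pHH - pHL - pLH + pLL) *
        (a*(x1-y1)^2 + 2*b*(x1-y1)*(x2-y2) + c*(x2-y2)^2)"
      using t K quad_nonneg[OF a0 det] by simp
    thus "(\<lambda>(bl, bh). reward J PS bl bh) ((1 - t) *\<^sub>R x + t *\<^sub>R y)
          \<le> (1 - t) * (\<lambda>(bl, bh). reward J PS bl bh) x + t * (\<lambda>(bl, bh). reward J PS bl bh) y"
      using id by (simp add: x y rew)
  qed
qed

end
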